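(* Let $(\Omega,\mathcal F,\mathbb P)$ be a probability space carrying a group of measurable bijections $\{\theta_n\}_{n\in\mathbb Z}$ each preserving $\mathbb P$, and let $\{a_n\}_{n\in\mathbb Z}$ be i.i.d. flow-compatible random variables with values in $\{1,2,\dots\}$, with $\mathbb E[a_0]<\infty$ and $\mathbb P[a_0=1]\in(0,1)$. Let $f(n)=n+a_n$ and, for $n\ge 1$, $d_n(0)=\#\{m\in\mathbb Z: f^n(m)=0\}$. Then for all $n\ge 1$, $$\mathbb E^s[d_n(0)]>1\quad\text{and}\quad \mathbb E^e[d_n(0)]<1.$$
   Context: $f^n$ is the $n$-th iterate of $f$. The descendants of $k$ are $D(k)=\{m:\exists\,j\ge 0,\ f^j(m)=k\}$; $k$ is successful if $D(k)$ is infinite and ephemeral otherwise; $\Phi^s,\Phi^e$ are the sets of successful and ephemeral integers. $\mathbb E^s$ and $\mathbb E^e$ denote expectation under the Palm probabilities $\mathbb P[\cdot\mid 0\in\Phi^s]$ and $\mathbb P[\cdot\mid 0\in\Phi^e]$ respectively (both events have positive probability under these assumptions). *)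

theory Defs
  imports "HOL-Probability.Probability"
begin

definition fmap :: "(int \<Rightarrow> 'a \<Rightarrow> int) \<Rightarrow> 'a \<Rightarrow> int \<Rightarrow> int" where
  "fmap a w m = m + a m w"

definition descendants :: "(int \<Rightarrow> 'a \<Rightarrow> int) \<Rightarrow> 'a \<Rightarrow> int \<Rightarrow> int set" where
  "descendants a w k = {m. \<exists>j::nat. (fmap a w ^^ j) m = k}"

definition successful :: "(int \<Rightarrow> 'a \<Rightarrow> int) \<Rightarrow> 'a \<Rightarrow> int \<Rightarrow> bool" where
  "successful a w k \<longleftrightarrow> infinite (descendants a w k)"

definition ephemeral :: "(int \<Rightarrow> 'a \<Rightarrow> int) \<Rightarrow> 'a \<Rightarrow> int \<Rightarrow> bool" where
  "ephemeral a w k \<longleftrightarrow> finite (descendants a w k)"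

definition dcount :: "(int \<Rightarrow> 'a \<Rightarrow> int) \<Rightarrow> nat \<Rightarrow> 'a \<Rightarrow> int \<Rightarrow> ennreal" where
  "dcount a n w k = emeasure (count_space UNIV) {m. (fmap a w ^^ n) m = k}"

text \<open>Expectation under the conditional (Palm) probability P[. | S].\<close>
definition cond_exp_given :: "'a measure \<Rightarrow> 'a set \<Rightarrow> ('a \<Rightarrow> ennreal) \<Rightarrow> ennreal" where
  "cond_exp_given M S X = (\<integral>\<^sup>+ w\<in>S. X w \<partial>M) / emeasure M S"

end

theory Submission
  imports Defs
begin

lemma ediv1:
  fixes y d :: ennreal
  assumes "y \<noteq> \<top>" "d \<noteq> \<top>" "0 < d"
  shows "1 < (y + d) / y"
proof (cases "y = 0")
  case True then show ?thesis using assms by simp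
next
  case False
  obtain r where r: "y = ennreal r" "0 \<le> r" using assms(1) by (cases y) auto
  obtain s where s: "d = ennreal s" "0 \<le> s" using assms(2) by (cases d) auto
  have rp: "0 < r" using False r by (auto simp: less_le)
  have sp: "0 < s" using assms(3) s by simp
  have yd: "y + d = ennreal (r + s)" using r s by simp
  have e: "(y + d) / y = ennreal ((r + s) / r)"
    unfolding yd unfolding r(1) using rp sp r s by (intro divide_ennreal) auto
  have "1 < (r + s) / r" using rp sp by simp
  then show ?thesis unfolding e using ennreal_less_iff[of 1 "(r + s) / r"] by simp
qed

lemma ediv2:
  fixes x d :: ennreal
  assumes "x \<noteq> \<top>" "d \<noteq> \<top>" "0 < d"
  shows "x / (x + d) < 1"
proof -
  obtain r where r: "x = ennreal r" "0 \<le> r" using assms(1) by (cases x) auto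
  obtain s where s: "d = ennreal s" "0 \<le> s" using assms(2) by (cases d) auto
  have sp: "0 < s" using assms(3) s by simp
  have xd: "x + d = ennreal (r + s)" using r s by simp
  have e: "x / (x + d) = ennreal (r / (r + s))"
    unfolding xd unfolding r(1) using sp r s by (intro divide_ennreal) auto
  have "r / (r + s) < 1" using sp r by simp
  then show ?thesis unfolding e using ennreal_less_iff[of "r / (r + s)" 1] r sp by simp
qed

locale efam = prob_space M for M :: "'a measure" +
  fixes \<theta> :: "int \<Rightarrow> 'a \<Rightarrow> 'a" and a :: "int \<Rightarrow> 'a \<Rightarrow> int"
  assumes theta_meas: "\<And>n. \<theta> n \<in> measurable M M"
    and theta_pres: "\<And>n. distr M M (\<theta> n) = M"
    and theta_add: "\<And>m n w. w \<in> space M \<Longrightarrow> \<theta> (m + n) w = \<theta> m (\<theta> n w)"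
    and a_meas: "\<And>n. a n \<in> measurable M (count_space UNIV)"
    and a_flow: "\<And>n w. w \<in> space M \<Longrightarrow> a n w = a 0 (\<theta> n w)"
    and a_indep: "indep_vars (\<lambda>_. count_space UNIV) a UNIV"
    and a_ident: "\<And>n. distr M (count_space UNIV) (a n) = distr M (count_space UNIV) (a 0)"
    and a_pos: "\<And>n w. w \<in> space M \<Longrightarrow> a n w \<ge> 1"
    and a_int: "integrable M (\<lambda>w. real_of_int (a 0 w))"
    and p1_pos: "0 < measure M {w \<in> space M. a 0 w = 1}"
    and p1_lt: "measure M {w \<in> space M. a 0 w = 1} < 1"
begin

abbreviation F :: "nat \<Rightarrow> 'a \<Rightarrow> int \<Rightarrow> int" where
  "F j w m \<equiv> (fmap a w ^^ j) m"

lemma F_Suc: "F (Suc j) w m = F j w m + a (F j w m) w"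
  by (simp add: fmap_def)

lemma F_mono: "w \<in> space M \<Longrightarrow> F j w m \<ge> m + int j"
proof (induction j)
  case (Suc j) then show ?case unfolding F_Suc using a_pos[of w "F j w m"] by simp
qed simp

lemma F_add: "F (i + j) w m = F i w (F j w m)"
  by (simp add: funpow_add)

lemma theta_space: "w \<in> space M \<Longrightarrow> \<theta> k w \<in> space M"
  using measurable_space[OF theta_meas] by blast

lemma a_shift: "w \<in> space M \<Longrightarrow> a y (\<theta> k w) = a (y + k) w"
  using a_flow[of "\<theta> k w" y] a_flow[of w "y+k"] theta_add[of w y k] theta_space[of w k] by simp

lemma F_shift: "w \<in> space M \<Longrightarrow> F j (\<theta> k w) m = F j w (m + k) - k"
proof (induction j)
  case (Suc j) then show ?case unfolding F_Suc by (simp add: a_shift)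
qed simp

lemma F_meas: "(\<lambda>w. F j w m) \<in> measurable M (count_space UNIV)"
proof (induction j)
  case 0 then show ?case by simp
next
  case (Suc j)
  have "(\<lambda>w. (\<lambda>i w. i + a i w) (F j w m) w) \<in> measurable M (count_space UNIV)"
    by (rule measurable_compose_countable'[OF _ Suc]) (auto intro: measurable_compose[OF a_meas])
  then show ?case unfolding F_Suc .
qed

lemma F_pred: "{w \<in> space M. F j w m = x} \<in> sets M"
  using measurable_sets[OF F_meas[of j m], of "{x}"] by (simp add: vimage_def Int_def conj_commute)

lemma desc_le: "w \<in> space M \<Longrightarrow> m \<in> descendants a w x \<Longrightarrow> m \<le> x"
proof -
  assume w: "w \<in> space M" and "m \<in> descendants a w x"
  then obtain j where "F j w m = x" by (auto simp: descendants_def)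
  with F_mono[OF w, of m j] show "m \<le> x" by simp
qed

lemma self_desc: "x \<in> descendants a w x"
  unfolding descendants_def by (auto intro: exI[of _ 0])

lemma succ_iff: "w \<in> space M \<Longrightarrow> successful a w x \<longleftrightarrow> (\<forall>N::nat. \<exists>m. m < x - int N \<and> (\<exists>j. F j w m = x))"
proof
  assume w: "w \<in> space M" and s: "successful a w x"
  show "\<forall>N::nat. \<exists>m. m < x - int N \<and> (\<exists>j. F j w m = x)"
  proof (rule ccontr)
    assume "\<not> ?thesis"
    then obtain N :: nat where N0: "\<forall>m. m < x - int N \<longrightarrow> \<not> (\<exists>j. F j w m = x)" by blast
    have N: "m \<ge> x - int N" if "F j w m = x" for m j
    proof (rule ccontr)
      assume "\<not> m \<ge> x - int N"
      then have "m < x - int N" by simp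
      with N0 that show False by blast
    qed
    have "descendants a w x \<subseteq> {x - int N..x}"
    proof
      fix m assume md: "m \<in> descendants a w x"
      then obtain j where "F j w m = x" by (auto simp: descendants_def)
      with N[OF this] desc_le[OF w md] show "m \<in> {x - int N..x}" by simp
    qed
    then have "finite (descendants a w x)" by (rule finite_subset) simp
    with s show False by (simp add: successful_def)
  qed
next
  assume w: "w \<in> space M" and r: "\<forall>N::nat. \<exists>m. m < x - int N \<and> (\<exists>j. F j w m = x)"
  show "successful a w x"
    unfolding successful_def
  proof
    assume fin: "finite (descendants a w x)"
    define mn where "mn = Min (descendants a w x)"
    have "mn \<le> x" unfolding mn_def using fin self_desc by (intro Min_le) auto
    obtain m j where m: "m < x - int (nat (x - mn))" "F j w m = x" using r by blast
    then have "m \<in> descendants a w x" by (auto simp: descendants_def)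
    then have "mn \<le> m" unfolding mn_def using fin by (intro Min_le) auto
    with m \<open>mn \<le> x\<close> show False by simp
  qed
qed

lemma succ_meas: "{w \<in> space M. successful a w x} \<in> sets M"
proof -
  have "{w \<in> space M. successful a w x} = {w\<in>space M. \<forall>N::nat. \<exists>m::int. m < x - int N \<and> (\<exists>j::nat. F j w m = x)}"
    using succ_iff by auto
  also have "\<dots> \<in> sets M"
    by (intro sets.sets_Collect_countable_All sets.sets_Collect_countable_Ex sets.sets_Collect_conj)
       (auto intro: F_pred)
  finally show ?thesis .
qed

lemma eph_meas: "{w \<in> space M. ephemeral a w x} \<in> sets M"
proof -
  have "{w \<in> space M. ephemeral a w x} = space M - {w \<in> space M. successful a w x}"
    by (auto simp: ephemeral_def successful_def)
  then show ?thesis using succ_meas by simp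
qed

lemma desc_shift: "w \<in> space M \<Longrightarrow> descendants a (\<theta> k w) x = (\<lambda>m. m - k) ` descendants a w (x + k)"
proof -
  assume w: "w \<in> space M"
  have "m \<in> descendants a (\<theta> k w) x \<longleftrightarrow> m + k \<in> descendants a w (x + k)" for m
  proof -
    have "(F j (\<theta> k w) m = x) = (F j w (m + k) = x + k)" for j using F_shift[OF w, of j k m] by auto
    then show ?thesis unfolding descendants_def by auto
  qed
  then show ?thesis by (force simp: image_iff)
qed

lemma succ_shift: "w \<in> space M \<Longrightarrow> successful a (\<theta> k w) x \<longleftrightarrow> successful a w (x + k)"
  unfolding successful_def using desc_shift[of w k x]
  by (simp add: finite_image_iff inj_on_def)

lemma eph_shift: "w \<in> space M \<Longrightarrow> ephemeral a (\<theta> k w) x \<longleftrightarrow> ephemeral a w (x + k)"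
  using succ_shift by (simp add: ephemeral_def successful_def)

lemma succ_fwd: "successful a w x \<Longrightarrow> successful a w (F k w x)"
proof -
  assume s: "successful a w x"
  have "descendants a w x \<subseteq> descendants a w (F k w x)"
  proof
    fix m assume "m \<in> descendants a w x"
    then obtain j where "F j w m = x" by (auto simp: descendants_def)
    then have "F (k + j) w m = F k w x" by (simp add: F_add)
    then show "m \<in> descendants a w (F k w x)" by (auto simp: descendants_def)
  qed
  with s show ?thesis unfolding successful_def using finite_subset by blast
qed

lemma theta_emeasure: "A \<in> sets M \<Longrightarrow> emeasure M (\<theta> k -` A \<inter> space M) = emeasure M A"
  using emeasure_distr[OF theta_meas, of A k] theta_pres[of k] by simp


lemma transport:
  assumes Qs: "\<And>w k x. w \<in> space M \<Longrightarrow> Q (\<theta> k w) x = Q w (x + k)"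
    and Qm: "\<And>x. {w \<in> space M. Q w x} \<in> sets M"
  shows "(\<integral>\<^sup>+w. dcount a j w 0 * indicator {w \<in> space M. Q w 0} w \<partial>M)
       = emeasure M {w \<in> space M. Q w (F j w 0)}"
proof -
  define T where "T = {w \<in> space M. Q w (F j w 0)}"
  define B where "B m = {w \<in> space M. F j w 0 = - m \<and> Q w (- m)}" for m
  define C where "C m = {w \<in> space M. F j w m = 0 \<and> Q w 0}" for m
  have Bm: "B m \<in> sets M" for m
  proof -
    have "B m = {w \<in> space M. F j w 0 = - m} \<inter> {w \<in> space M. Q w (- m)}" by (auto simp: B_def)
    then show ?thesis using F_pred Qm by simp
  qed
  have Cm: "C m \<in> sets M" for m
  proof -
    have "C m = {w \<in> space M. F j w m = 0} \<inter> {w \<in> space M. Q w 0}" by (auto simp: C_def)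
    then show ?thesis using F_pred Qm by simp
  qed
  have Tm: "T \<in> sets M"
  proof -
    have "T = (\<Union>x. {w \<in> space M. F j w 0 = x} \<inter> {w \<in> space M. Q w x})" by (auto simp: T_def)
    then show ?thesis using F_pred Qm by auto
  qed
  have CB: "C m = \<theta> m -` B m \<inter> space M" for m
    using theta_space F_shift Qs by (auto simp: B_def C_def)
  have "(\<integral>\<^sup>+w. dcount a j w 0 * indicator {w \<in> space M. Q w 0} w \<partial>M)
      = (\<integral>\<^sup>+w. \<integral>\<^sup>+m. indicator (C m) w \<partial>count_space UNIV \<partial>M)"
  proof (rule nn_integral_cong)
    fix w assume w: "w \<in> space M"
    have "dcount a j w 0 = (\<integral>\<^sup>+m. indicator {m. F j w m = 0} m \<partial>count_space UNIV)"
      unfolding dcount_def by simp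
    then have "dcount a j w 0 * indicator {w \<in> space M. Q w 0} w
       = (\<integral>\<^sup>+m. indicator {m. F j w m = 0} m * indicator {w \<in> space M. Q w 0} w \<partial>count_space UNIV)"
      by (simp add: nn_integral_multc)
    also have "\<dots> = (\<integral>\<^sup>+m. indicator (C m) w \<partial>count_space UNIV)"
      using w by (intro nn_integral_cong) (auto simp: C_def indicator_def)
    finally show "dcount a j w 0 * indicator {w \<in> space M. Q w 0} w = (\<integral>\<^sup>+m. indicator (C m) w \<partial>count_space UNIV)" .
  qed
  also have "\<dots> = (\<integral>\<^sup>+m. \<integral>\<^sup>+w. indicator (C m) w \<partial>M \<partial>count_space UNIV)"
    by (rule nn_integral_count_space_nn_integral) (auto intro: borel_measurable_indicator Cm)
  also have "\<dots> = (\<integral>\<^sup>+m. emeasure M (B m) \<partial>count_space UNIV)"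
    using Cm Bm by (simp add: CB theta_emeasure)
  also have "\<dots> = (\<integral>\<^sup>+m. \<integral>\<^sup>+w. indicator (B m) w \<partial>M \<partial>count_space UNIV)"
    using Bm by simp
  also have "\<dots> = (\<integral>\<^sup>+w. \<integral>\<^sup>+m. indicator (B m) w \<partial>count_space UNIV \<partial>M)"
    by (rule nn_integral_count_space_nn_integral[symmetric]) (auto intro: borel_measurable_indicator Bm)
  also have "\<dots> = (\<integral>\<^sup>+w. indicator T w \<partial>M)"
  proof (rule nn_integral_cong)
    fix w assume w: "w \<in> space M"
    have "(\<integral>\<^sup>+m. indicator (B m) w \<partial>count_space UNIV)
        = (\<integral>\<^sup>+m. indicator {- F j w 0} m * indicator T w \<partial>count_space UNIV)"
      using w by (intro nn_integral_cong) (auto simp: B_def T_def indicator_def)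
    also have "\<dots> = indicator T w"
      by (simp add: nn_integral_multc)
    finally show "(\<integral>\<^sup>+m. indicator (B m) w \<partial>count_space UNIV) = indicator T w" .
  qed
  also have "\<dots> = emeasure M T" using Tm by simp
  finally show ?thesis unfolding T_def .
qed

lemma a_set: "{w \<in> space M. P (a i w)} \<in> sets M"
  using measurable_sets[OF a_meas[of i], of "{x. P x}"] by (simp add: vimage_def Int_def conj_commute)

lemma a_dist: "prob {w \<in> space M. P (a i w)} = prob {w \<in> space M. P (a 0 w)}"
  using measure_distr[OF a_meas[of i], of "{x. P x}"] measure_distr[OF a_meas[of 0], of "{x. P x}"] a_ident[of i]
  by (simp add: vimage_def Int_def conj_commute)

lemma count_le: "(x::int) \<ge> 0 \<Longrightarrow> (\<Sum>s<n. if int s \<le> x then 1::real else 0) = real (min n (nat x + 1))"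
  by (induction n) auto

lemma tail_summable: "summable (\<lambda>s::nat. prob {w\<in>space M. a 0 w \<ge> int s})"
proof (rule summableI_nonneg_bounded)
  fix n
  have "(\<Sum>s<n. prob {w\<in>space M. a 0 w \<ge> int s})
      = (\<Sum>s<n. integral\<^sup>L M (indicator {w\<in>space M. a 0 w \<ge> int s}))"
    by (simp add: Int_absorb2)
  also have "\<dots> = integral\<^sup>L M (\<lambda>w. \<Sum>s<n. indicator {w\<in>space M. a 0 w \<ge> int s} w)"
    by (rule Bochner_Integration.integral_sum[symmetric]) (intro integrable_real_indicator a_set, simp add: less_top[symmetric])
  also have "\<dots> \<le> integral\<^sup>L M (\<lambda>w. real_of_int (a 0 w) + 1)"
  proof (rule integral_mono)
    show "integrable M (\<lambda>w. \<Sum>s<n. indicator {w\<in>space M. a 0 w \<ge> int s} w :: real)"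
      by (rule Bochner_Integration.integrable_sum, intro integrable_real_indicator a_set) (simp add: less_top[symmetric])
    show "integrable M (\<lambda>w. real_of_int (a 0 w) + 1)" using a_int by simp
    fix w assume w: "w \<in> space M"
    have "(\<Sum>s<n. indicator {w\<in>space M. a 0 w \<ge> int s} w :: real) = (\<Sum>s<n. if int s \<le> a 0 w then 1::real else 0)"
      using w by (intro sum.cong) (auto simp: indicator_def)
    also have "\<dots> = real (min n (nat (a 0 w) + 1))" using a_pos[OF w, of 0] by (intro count_le) simp
    also have "\<dots> \<le> real_of_int (a 0 w) + 1" using a_pos[OF w, of 0] by simp
    finally show "(\<Sum>s<n. indicator {w\<in>space M. a 0 w \<ge> int s} w :: real) \<le> real_of_int (a 0 w) + 1" .
  qed
  finally show "(\<Sum>s<n. prob {w\<in>space M. a 0 w \<ge> int s}) \<le> integral\<^sup>L M (\<lambda>w. real_of_int (a 0 w) + 1)" .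
qed simp

lemma choose_L: "\<exists>(L::nat) \<tau>. \<tau> < prob {w \<in> space M. a 0 w = 1} \<and>
    prob {w\<in>space M. a 0 w \<ge> int (L + 1)} < 1 - prob {w \<in> space M. a 0 w = 1}
   \<and> (\<forall>K. (\<Sum>n\<in>{1..K}. prob {w\<in>space M. a 0 w \<ge> int (n + (L + 1))}) \<le> \<tau>)"
proof -
  define f where "f = (\<lambda>s::nat. prob {w\<in>space M. a 0 w \<ge> int s})"
  define p where "p = prob {w \<in> space M. a 0 w = 1}"
  have r: "0 < min p (1 - p)" using p1_pos p1_lt by (simp add: p_def)
  have sf: "summable f" using tail_summable by (simp add: f_def)
  obtain N where N: "\<And>n. n \<ge> N \<Longrightarrow> norm (\<Sum>i. f (i + n)) < min p (1 - p)"
    using suminf_exist_split[OF r sf] by blast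
  have st: "summable (\<lambda>i. f (i + (N + 1)))" using summable_ignore_initial_segment[OF sf] .
  have t: "(\<Sum>i. f (i + (N + 1))) < min p (1 - p)"
    using N[of "N+1"] abs_ge_self[of "(\<Sum>i. f (i + (N + 1)))"] unfolding real_norm_def by linarith
  have "f (N + 1) \<le> (\<Sum>i. f (i + (N + 1)))"
    using sum_le_suminf[OF st, of "{0}"] by (simp add: f_def)
  moreover have "(\<Sum>n\<in>{1..K}. f (n + (N + 1))) \<le> (\<Sum>i. f (i + (N + 1)))" for K
    using sum_le_suminf[OF st, of "{1..K}"] by (simp add: f_def)
  ultimately have "(\<Sum>i. f (i + (N + 1))) < p \<and> f (N + 1) < 1 - p \<and> (\<forall>K. (\<Sum>n\<in>{1..K}. f (n + (N + 1))) \<le> (\<Sum>i. f (i + (N + 1))))"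
    using t by (meson le_less_trans min.strict_boundedE)
  then show ?thesis unfolding f_def p_def by blast
qed

lemma fsub: "A \<in> sets M \<Longrightarrow> B \<in> sets M \<Longrightarrow> prob (A \<union> B) \<le> prob A + prob B"
  by (rule measure_subadditive) auto

lemma construction:
  fixes L :: nat and \<tau> :: real
  assumes tau: "\<tau> < prob {w \<in> space M. a 0 w = 1}"
   and L1: "prob {w\<in>space M. a 0 w \<ge> int (L + 1)} < 1 - prob {w \<in> space M. a 0 w = 1}"
   and L2: "\<And>K. (\<Sum>n\<in>{1..K}. prob {w\<in>space M. a 0 w \<ge> int (n + (L + 1))}) \<le> \<tau>"
  shows "0 < prob {w \<in> space M. \<forall>i < int L. a i w \<in> (if i < 0 then {x. x \<noteq> -i \<and> x < int L - i} else {1})}"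
proof -
  define p where "p = prob {w \<in> space M. a 0 w = 1}"
  define C where "C i = (if i < 0 then {x. x \<noteq> -i \<and> x < int L - i} else {1::int})" for i :: int
  define X where "X i = a i -` C i \<inter> space M" for i
  define J1 where "J1 K = (\<lambda>n::nat. - int n - 1) ` {1..Suc K}" for K
  define J where "J K = J1 K \<union> {-1..<int L}" for K
  define E where "E K = (\<Inter>i\<in>J K. X i)" for K
  define T where "T = {w \<in> space M. \<forall>i < int L. a i w \<in> C i}"
  have ind: "indep_sets (\<lambda>i. {a i -` A \<inter> space M | A. A \<in> sets (count_space UNIV)}) UNIV"
    using a_indep by (simp add: indep_vars_def2)
  have prodX: "prob (\<Inter>i\<in>I. X i) = (\<Prod>i\<in>I. prob (X i))" if "finite I" "I \<noteq> {}" for I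
    by (rule indep_setsD[OF ind]) (use that in \<open>auto simp: X_def\<close>)
  have Xm: "X i \<in> sets M" for i
    unfolding X_def by (rule measurable_sets[OF a_meas]) simp
  have Xe: "X i = {w \<in> space M. a i w \<in> C i}" for i by (auto simp: X_def)
  have pX: "prob (X i) = prob {w \<in> space M. a 0 w \<in> C i}" for i
    unfolding Xe by (rule a_dist)
  define q where "q = prob (X (-1))"
  have q: "0 < q"
  proof -
    have "space M \<subseteq> {w \<in> space M. a 0 w = 1} \<union> {w\<in>space M. a 0 w \<ge> int (L + 1)} \<union> {w \<in> space M. a 0 w \<in> C (-1)}"
      by (auto simp: C_def)
    then have "prob (space M) \<le> prob ({w \<in> space M. a 0 w = 1} \<union> {w\<in>space M. a 0 w \<ge> int (L + 1)} \<union> {w \<in> space M. a 0 w \<in> C (-1)})"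
      by (intro finite_measure_mono) (auto intro!: a_set)
    also have "\<dots> \<le> prob ({w \<in> space M. a 0 w = 1} \<union> {w\<in>space M. a 0 w \<ge> int (L + 1)}) + prob {w \<in> space M. a 0 w \<in> C (-1)}"
      by (intro fsub) (auto intro!: a_set)
    also have "\<dots> \<le> p + prob {w\<in>space M. a 0 w \<ge> int (L + 1)} + prob {w \<in> space M. a 0 w \<in> C (-1)}"
      using fsub[OF a_set[of "\<lambda>x. x = 1" 0] a_set[of "\<lambda>x. x \<ge> int (L + 1)" 0]]
      by (simp add: p_def)
    finally show ?thesis using L1 unfolding q_def pX p_def by (simp add: prob_space)
  qed
  have cpos: "0 < p - \<tau>" using tau by (simp add: p_def)
  have left: "prob (\<Inter>i\<in>J1 K. X i) \<ge> p - \<tau>" for K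
  proof -
    have injJ: "inj_on (\<lambda>n::nat. - int n - 1) {1..Suc K}" by (auto simp: inj_on_def)
    have fin: "finite (J1 K)" by (simp add: J1_def)
    have ne: "J1 K \<noteq> {}" by (simp add: J1_def)
    have compl: "space M - (\<Inter>i\<in>J1 K. X i) = (\<Union>i\<in>J1 K. space M - X i)" using ne by auto
    have "prob (\<Union>i\<in>J1 K. space M - X i) \<le> (\<Sum>i\<in>J1 K. prob (space M - X i))"
      using fin Xm by (intro finite_measure_subadditive_finite) auto
    also have "\<dots> = (\<Sum>n\<in>{1..Suc K}. prob (space M - X (- int n - 1)))"
      unfolding J1_def by (rule sum.reindex[OF injJ, unfolded comp_def])
    also have "\<dots> \<le> (\<Sum>n\<in>{1..Suc K}. prob {w \<in> space M. a 0 w = int n + 1} + prob {w\<in>space M. a 0 w \<ge> int (n + (L + 1))})"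
    proof (rule sum_mono)
      fix n assume n: "n \<in> {1..Suc K}"
      have "space M - X (- int n - 1) = {w \<in> space M. a (- int n - 1) w = int n + 1} \<union> {w \<in> space M. a (- int n - 1) w \<ge> int (n + (L + 1))}"
        by (auto simp: X_def C_def)
      then have "prob (space M - X (- int n - 1)) \<le> prob {w \<in> space M. a (- int n - 1) w = int n + 1} + prob {w \<in> space M. a (- int n - 1) w \<ge> int (n + (L + 1))}"
        using fsub[OF a_set[of "\<lambda>x. x = int n + 1" "- int n - 1"] a_set[of "\<lambda>x. x \<ge> int (n + (L + 1))" "- int n - 1"]]
        by simp
      then show "prob (space M - X (- int n - 1)) \<le> prob {w \<in> space M. a 0 w = int n + 1} + prob {w\<in>space M. a 0 w \<ge> int (n + (L + 1))}"
        using a_dist[of "\<lambda>x. x = int n + 1" "- int n - 1"] a_dist[of "\<lambda>x. x \<ge> int (n + (L + 1))" "- int n - 1"] by linarith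
    qed
    also have "\<dots> = (\<Sum>n\<in>{1..Suc K}. prob {w \<in> space M. a 0 w = int n + 1}) + (\<Sum>n\<in>{1..Suc K}. prob {w\<in>space M. a 0 w \<ge> int (n + (L + 1))})"
      by (rule sum.distrib)
    also have "\<dots> \<le> (1 - p) + \<tau>"
    proof (rule add_mono)
      have "(\<Sum>n\<in>{1..Suc K}. prob {w \<in> space M. a 0 w = int n + 1}) = prob (\<Union>n\<in>{1..Suc K}. {w \<in> space M. a 0 w = int n + 1})"
        by (rule finite_measure_finite_Union[symmetric]) (auto intro!: a_set simp: disjoint_family_on_def)
      also have "\<dots> \<le> prob (space M - {w \<in> space M. a 0 w = 1})"
        by (intro finite_measure_mono) (auto intro!: a_set)
      also have "\<dots> = 1 - p" unfolding p_def by (rule prob_compl[OF a_set])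
      finally show "(\<Sum>n\<in>{1..Suc K}. prob {w \<in> space M. a 0 w = int n + 1}) \<le> 1 - p" .
      show "(\<Sum>n\<in>{1..Suc K}. prob {w\<in>space M. a 0 w \<ge> int (n + (L + 1))}) \<le> \<tau>" by (rule L2)
    qed
    finally have "prob (space M - (\<Inter>i\<in>J1 K. X i)) \<le> 1 - p + \<tau>" unfolding compl .
    moreover have "prob (space M - (\<Inter>i\<in>J1 K. X i)) = 1 - prob (\<Inter>i\<in>J1 K. X i)"
      by (rule prob_compl) (use fin ne Xm in auto)
    ultimately show ?thesis by simp
  qed
  define \<kappa> where "\<kappa> = (p - \<tau>) * (q * p ^ L)"
  have kpos: "0 < \<kappa>" unfolding \<kappa>_def using cpos q p1_pos by (simp add: p_def)
  have EK: "prob (E K) \<ge> \<kappa>" for K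
  proof -
    have fin1: "finite (J1 K)" by (simp add: J1_def)
    have ne1: "J1 K \<noteq> {}" by (simp add: J1_def)
    have disj: "J1 K \<inter> {-1..<int L} = {}" by (auto simp: J1_def)
    have ins: "{-1..<int L} = insert (-1) {0..<int L}" by auto
    have "prob (E K) = (\<Prod>i\<in>J K. prob (X i))"
      unfolding E_def by (rule prodX) (auto simp: J_def fin1)
    also have "\<dots> = (\<Prod>i\<in>J1 K. prob (X i)) * (\<Prod>i\<in>{-1..<int L}. prob (X i))"
      unfolding J_def by (rule prod.union_disjoint) (auto simp: fin1 disj)
    also have "(\<Prod>i\<in>J1 K. prob (X i)) = prob (\<Inter>i\<in>J1 K. X i)"
      by (rule prodX[symmetric]) (auto simp: fin1 ne1)
    also have "(\<Prod>i\<in>{-1..<int L}. prob (X i)) = q * (\<Prod>i\<in>{0..<int L}. prob (X i))"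
      unfolding ins q_def by (subst prod.insert) auto
    also have "(\<Prod>i\<in>{0..<int L}. prob (X i)) = (\<Prod>i\<in>{0..<int L}. p)"
      by (intro prod.cong) (auto simp: pX C_def p_def)
    also have "\<dots> = p ^ L" by simp
    finally have e: "prob (E K) = prob (\<Inter>i\<in>J1 K. X i) * (q * p ^ L)" .
    have "0 \<le> q * p ^ L" using q by (simp add: p_def)
    then show ?thesis unfolding e \<kappa>_def using left[of K] by (intro mult_right_mono) auto
  qed
  have Em: "E K \<in> sets M" for K
    unfolding E_def using Xm by (intro sets.finite_INT) (auto simp: J_def J1_def)
  have Jmono: "J K \<subseteq> J K'" if "K \<le> K'" for K K'
    using that by (auto simp: J_def J1_def)
  have dec: "decseq E" unfolding decseq_def
  proof (intro allI impI)
    fix m n :: nat assume "m \<le> n"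
    show "E n \<subseteq> E m" unfolding E_def by (rule INT_anti_mono[OF Jmono[OF \<open>m \<le> n\<close>]]) simp
  qed
  have lim: "(\<lambda>K. prob (E K)) \<longlonglongrightarrow> prob (\<Inter>K. E K)"
    by (rule finite_Lim_measure_decseq) (use Em dec in auto)
  have "\<kappa> \<le> prob (\<Inter>K. E K)"
    by (rule LIMSEQ_le_const[OF lim]) (use EK in auto)
  also have "\<dots> \<le> prob T"
  proof (rule finite_measure_mono)
    show "(\<Inter>K. E K) \<subseteq> T"
    proof
      fix w assume w: "w \<in> (\<Inter>K. E K)"
      have "-1 \<in> J 0" by (simp add: J_def)
      moreover have "w \<in> E 0" using w by blast
      ultimately have "w \<in> X (-1)" unfolding E_def by blast
      then have ws: "w \<in> space M" by (simp add: X_def)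
      have "a i w \<in> C i" if i: "i < int L" for i
      proof -
        have "\<exists>K. i \<in> J K"
        proof (cases "i \<ge> -1")
          case True then show ?thesis using i by (auto simp: J_def)
        next
          case False
          then have "i = - int (nat (- i - 1)) - 1" "nat (- i - 1) \<in> {1..Suc (nat (- i - 1))}" by auto
          then show ?thesis unfolding J_def J1_def by blast
        qed
        then obtain K where "i \<in> J K" by blast
        moreover have "w \<in> E K" using w by blast
        ultimately have "w \<in> X i" unfolding E_def by blast
        then show ?thesis by (simp add: X_def)
      qed
      then show "w \<in> T" using ws by (auto simp: T_def)
    qed
    show "T \<in> sets M"
    proof -
      have "T = (\<Inter>i\<in>{..<int L}. X i) \<inter> space M" by (auto simp: T_def X_def)
      also have "\<dots> \<in> sets M" using Xm by (intro sets.Int sets.countable_INT') auto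
      finally show ?thesis .
    qed
  qed
  finally show ?thesis using kpos unfolding T_def C_def by simp
qed

lemma F_one: "F 1 w m = m + a m w"
  by (simp add: fmap_def)

lemma event_good:
  fixes L :: nat
  assumes w: "w \<in> space M"
    and H: "\<forall>i < int L. a i w \<in> (if i < 0 then {x. x \<noteq> -i \<and> x < int L - i} else {1})"
  shows "ephemeral a w 0 \<and> successful a w (F L w 0)"
proof -
  have Hn: "a i w \<noteq> - i \<and> a i w < int L - i" if "i < 0" for i
  proof -
    have "i < int L" using that by simp
    then have "a i w \<in> (if i < 0 then {x. x \<noteq> -i \<and> x < int L - i} else {1})" using H by blast
    then show ?thesis using that by simp
  qed
  have Hp: "a i w = 1" if "0 \<le> i" "i < int L" for i using H that by auto
  have orb: "j \<le> L \<Longrightarrow> F j w 0 = int j" for j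
  proof (induction j)
    case (Suc j) then show ?case unfolding F_Suc using Hp[of "int j"] by simp
  qed simp
  have reach: "\<forall>m. nat (int L - m) = k \<longrightarrow> m < int L \<longrightarrow> (\<exists>j. F j w m = int L)" for k
  proof (induction k rule: less_induct)
    case (less k)
    show ?case
    proof (intro allI impI)
      fix m assume k: "nat (int L - m) = k" and m: "m < int L"
      have a1: "a m w \<ge> 1" using a_pos[OF w] .
      have le: "m + a m w \<le> int L"
      proof (cases "m < 0")
        case True then show ?thesis using Hn[OF True] by simp
      next
        case False then show ?thesis using Hp[of m] m by simp
      qed
      show "\<exists>j. F j w m = int L"
      proof (cases "m + a m w = int L")
        case True then show ?thesis using F_one[of w m] by metis
      next
        case False
        then have lt: "m + a m w < int L" using le by simp
        have "nat (int L - (m + a m w)) < k" using k a1 lt by simp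
        with less lt obtain j where "F j w (m + a m w) = int L" by blast
        then have "F (j + 1) w m = int L" using F_add[of j 1 w m] F_one[of w m] by metis
        then show ?thesis by blast
      qed
    qed
  qed
  have succ: "successful a w (int L)"
    unfolding succ_iff[OF w]
  proof
    fix N :: nat
    have "int L - int N - 1 < int L" by simp
    then obtain j where "F j w (int L - int N - 1) = int L" using reach by blast
    then show "\<exists>m. m < int L - int N \<and> (\<exists>j. F j w m = int L)" by (intro exI[of _ "int L - int N - 1"]) auto
  qed
  have "descendants a w 0 \<subseteq> {0}"
  proof
    fix m assume "m \<in> descendants a w 0"
    then obtain j where j: "F j w m = 0" by (auto simp: descendants_def)
    show "m \<in> {0}"
    proof (cases j)
      case 0 then show ?thesis using j by simp
    next
      case (Suc k)
      define y where "y = F k w m"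
      have e: "y + a y w = 0" using j unfolding Suc F_Suc y_def .
      have "a y w \<ge> 1" using a_pos[OF w] .
      then have "y < 0" using e by simp
      then have "a y w \<noteq> - y" using Hn by blast
      with e show ?thesis by simp
    qed
  qed
  then have "ephemeral a w 0" unfolding ephemeral_def using finite_subset by blast
  with succ orb[of L] show ?thesis by simp
qed

lemma eph_not: "ephemeral a w x \<longleftrightarrow> \<not> successful a w x"
  by (simp add: ephemeral_def successful_def)

lemma comp_meas: "(\<And>x. {w \<in> space M. P w x} \<in> sets M) \<Longrightarrow> {w \<in> space M. P w (F j w m)} \<in> sets M"
proof -
  assume P: "\<And>x. {w \<in> space M. P w x} \<in> sets M"
  have "{w \<in> space M. P w (F j w m)} = (\<Union>x. {w \<in> space M. F j w m = x} \<inter> {w \<in> space M. P w x})" by auto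
  then show ?thesis using F_pred P by auto
qed

lemma positive_step: "0 < emeasure M {w \<in> space M. ephemeral a w 0 \<and> successful a w (fmap a w 0)}"
proof -
  obtain L :: nat and \<tau> where tau: "\<tau> < prob {w \<in> space M. a 0 w = 1}"
   and L1: "prob {w\<in>space M. a 0 w \<ge> int (L + 1)} < 1 - prob {w \<in> space M. a 0 w = 1}"
   and L2: "\<And>K. (\<Sum>n\<in>{1..K}. prob {w\<in>space M. a 0 w \<ge> int (n + (L + 1))}) \<le> \<tau>"
    using choose_L by blast
  define G where "G = {w \<in> space M. \<forall>i < int L. a i w \<in> (if i < 0 then {x. x \<noteq> -i \<and> x < int L - i} else {1})}"
  have G: "0 < prob G" unfolding G_def by (rule construction[OF tau L1 L2])
  define B where "B j = {w \<in> space M. ephemeral a w (F j w 0) \<and> successful a w (F (Suc j) w 0)}" for j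
  have Bm: "B j \<in> sets M" for j
  proof -
    have "B j = {w \<in> space M. ephemeral a w (F j w 0)} \<inter> {w \<in> space M. successful a w (F (Suc j) w 0)}"
      by (auto simp: B_def)
    then show ?thesis using sets.Int[OF comp_meas[where P="\<lambda>w x. ephemeral a w x", OF eph_meas, of j 0] comp_meas[where P="\<lambda>w x. successful a w x", OF succ_meas, of "Suc j" 0]] by metis
  qed
  have GB: "G \<subseteq> (\<Union>j\<in>{..<L}. B j)"
  proof
    fix w assume wG: "w \<in> G"
    then have w: "w \<in> space M" by (simp add: G_def)
    have g: "ephemeral a w 0 \<and> successful a w (F L w 0)"
      using wG event_good[where L=L, OF w] by (simp add: G_def)
    define j0 where "j0 = (LEAST j. successful a w (F j w 0))"
    have s0: "successful a w (F j0 w 0)" unfolding j0_def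
      by (rule LeastI[where P="\<lambda>j. successful a w (F j w 0)" and k=L]) (use g in simp)
    have jL: "j0 \<le> L" unfolding j0_def
      by (rule Least_le[where P="\<lambda>j. successful a w (F j w 0)" and k=L]) (use g in simp)
    have "j0 \<noteq> 0"
    proof
      assume "j0 = 0"
      with s0 g show False by (simp add: ephemeral_def successful_def)
    qed
    then obtain j where j: "j0 = Suc j" by (cases j0) auto
    have "\<not> successful a w (F j w 0)" using not_less_Least[of j "\<lambda>j. successful a w (F j w 0)"] j unfolding j0_def by simp
    then have "w \<in> B j" using s0 j w by (simp add: B_def ephemeral_def successful_def)
    moreover have "j < L" using j jL by simp
    ultimately show "w \<in> (\<Union>j\<in>{..<L}. B j)" by blast
  qed
  obtain j where Bj: "0 < emeasure M (B j)"
  proof (rule ccontr)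
    assume "\<not> thesis"
    then have z: "emeasure M (B j) = 0" for j using that by (auto simp: zero_less_iff_neq_zero)
    have "emeasure M G \<le> emeasure M (\<Union>j\<in>{..<L}. B j)"
      using GB Bm by (intro emeasure_mono) auto
    also have "\<dots> \<le> (\<Sum>j\<in>{..<L}. emeasure M (B j))"
      using Bm by (intro emeasure_subadditive_finite) auto
    also have "\<dots> = 0" using z by simp
    finally have "emeasure M G = 0" by simp
    then have "prob G = 0" by (simp add: measure_def)
    with G show False by simp
  qed
  define Q where "Q w x = (ephemeral a w x \<and> successful a w (fmap a w x))" for w x
  have Qs: "Q (\<theta> k w) x = Q w (x + k)" if "w \<in> space M" for w k x
  proof -
    have "fmap a (\<theta> k w) x = fmap a w (x + k) - k" using that by (simp add: fmap_def a_shift)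
    then show ?thesis unfolding Q_def using that by (simp add: eph_shift succ_shift)
  qed
  have Qm: "{w \<in> space M. Q w x} \<in> sets M" for x
  proof -
    have "{w \<in> space M. Q w x} = {w \<in> space M. ephemeral a w x} \<inter> {w \<in> space M. successful a w (F 1 w x)}"
      by (auto simp: Q_def)
    then show ?thesis using sets.Int[OF eph_meas comp_meas[where P="\<lambda>w x. successful a w x", OF succ_meas, of 1 x]] by metis
  qed
  have tr: "(\<integral>\<^sup>+w. dcount a j w 0 * indicator {w \<in> space M. Q w 0} w \<partial>M) = emeasure M (B j)"
  proof -
    have "(\<integral>\<^sup>+w. dcount a j w 0 * indicator {w \<in> space M. Q w 0} w \<partial>M) = emeasure M {w \<in> space M. Q w (F j w 0)}"
      by (rule transport[OF Qs Qm])
    also have "{w \<in> space M. Q w (F j w 0)} = B j" by (simp add: B_def Q_def)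
    finally show ?thesis .
  qed
  show ?thesis
  proof (rule ccontr)
    assume "\<not> ?thesis"
    then have z: "emeasure M {w \<in> space M. Q w 0} = 0" by (simp add: Q_def zero_less_iff_neq_zero)
    have "(\<integral>\<^sup>+w. dcount a j w 0 * indicator {w \<in> space M. Q w 0} w \<partial>M) \<le> (\<integral>\<^sup>+w. \<top> * indicator {w \<in> space M. Q w 0} w \<partial>M)"
      by (intro nn_integral_mono) (auto simp: indicator_def)
    also have "\<dots> = 0" using Qm z by (simp add: nn_integral_cmult_indicator)
    finally show False using tr Bj by simp
  qed
qed

lemma main_loc:
  assumes n: "n \<ge> 1"
  shows "cond_exp_given M {w \<in> space M. successful a w 0} (\<lambda>w. dcount a n w 0) > 1
       \<and> cond_exp_given M {w \<in> space M. ephemeral a w 0} (\<lambda>w. dcount a n w 0) < 1"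
proof -
  define S where "S = {w \<in> space M. successful a w 0}"
  define E where "E = {w \<in> space M. ephemeral a w 0}"
  define D where "D = {w \<in> space M. ephemeral a w 0 \<and> successful a w (F n w 0)}"
  have Sm: "S \<in> sets M" unfolding S_def by (rule succ_meas)
  have Em: "E \<in> sets M" unfolding E_def by (rule eph_meas)
  have Dm: "D \<in> sets M"
  proof -
    have "D = E \<inter> {w \<in> space M. successful a w (F n w 0)}" by (auto simp: D_def E_def)
    then show ?thesis using sets.Int[OF Em comp_meas[where P="\<lambda>w x. successful a w x", OF succ_meas, of n 0]] by metis
  qed
  have Dpos: "0 < emeasure M D"
  proof -
    have "{w \<in> space M. ephemeral a w 0 \<and> successful a w (fmap a w 0)} \<subseteq> D"
    proof
      fix w assume "w \<in> {w \<in> space M. ephemeral a w 0 \<and> successful a w (fmap a w 0)}"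
      then have w: "w \<in> space M" "ephemeral a w 0" "successful a w (F 1 w 0)" by auto
      have "F n w 0 = F (n - 1) w (F 1 w 0)" using F_add[of "n - 1" 1 w 0] n by simp
      then show "w \<in> D" using succ_fwd[OF w(3), of "n - 1"] w by (simp add: D_def)
    qed
    then have "emeasure M {w \<in> space M. ephemeral a w 0 \<and> successful a w (fmap a w 0)} \<le> emeasure M D"
      using Dm by (intro emeasure_mono)
    with positive_step show ?thesis by simp
  qed
  have Dfin: "emeasure M D \<noteq> \<top>" by simp
  have XS: "(\<integral>\<^sup>+w\<in>S. dcount a n w 0 \<partial>M) = emeasure M S + emeasure M D"
  proof -
    have "(\<integral>\<^sup>+w\<in>S. dcount a n w 0 \<partial>M) = emeasure M {w \<in> space M. successful a w (F n w 0)}"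
      unfolding S_def by (rule transport) (auto simp: succ_shift succ_meas)
    also have "{w \<in> space M. successful a w (F n w 0)} = S \<union> D"
      using succ_fwd[where x=0 and k=n] unfolding S_def D_def eph_not by blast
    also have "emeasure M (S \<union> D) = emeasure M S + emeasure M D"
      using Sm Dm by (intro plus_emeasure[symmetric]) (auto simp: S_def D_def eph_not)
    finally show ?thesis .
  qed
  have XE: "emeasure M E = (\<integral>\<^sup>+w\<in>E. dcount a n w 0 \<partial>M) + emeasure M D"
  proof -
    have "(\<integral>\<^sup>+w\<in>E. dcount a n w 0 \<partial>M) = emeasure M {w \<in> space M. ephemeral a w (F n w 0)}"
      unfolding E_def by (rule transport) (auto simp: eph_shift eph_meas)
    moreover have "E = {w \<in> space M. ephemeral a w (F n w 0)} \<union> D"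
      using succ_fwd[where x=0 and k=n] unfolding E_def D_def eph_not by blast
    moreover have "emeasure M ({w \<in> space M. ephemeral a w (F n w 0)} \<union> D) = emeasure M {w \<in> space M. ephemeral a w (F n w 0)} + emeasure M D"
      using Dm comp_meas[where P="\<lambda>w x. ephemeral a w x", OF eph_meas, of n 0] by (intro plus_emeasure[symmetric]) (auto simp: D_def eph_not)
    ultimately show ?thesis by simp
  qed
  have c1: "1 < (emeasure M S + emeasure M D) / emeasure M S"
    using Dpos by (intro ediv1) (simp_all add: emeasure_finite)
  have fE: "(\<integral>\<^sup>+w\<in>E. dcount a n w 0 \<partial>M) \<noteq> \<top>"
  proof -
    have "(\<integral>\<^sup>+w\<in>E. dcount a n w 0 \<partial>M) \<le> emeasure M E" unfolding XE by (rule add_increasing2) simp_all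
    then show ?thesis using emeasure_finite[of E] top_unique by metis
  qed
  have c2: "(\<integral>\<^sup>+w\<in>E. dcount a n w 0 \<partial>M) / ((\<integral>\<^sup>+w\<in>E. dcount a n w 0 \<partial>M) + emeasure M D) < 1"
    using Dpos fE by (intro ediv2) (simp_all add: emeasure_finite)
  have e1: "cond_exp_given M S (\<lambda>w. dcount a n w 0) = (emeasure M S + emeasure M D) / emeasure M S"
    unfolding cond_exp_given_def XS ..
  have e2: "cond_exp_given M E (\<lambda>w. dcount a n w 0)
     = (\<integral>\<^sup>+w\<in>E. dcount a n w 0 \<partial>M) / ((\<integral>\<^sup>+w\<in>E. dcount a n w 0 \<partial>M) + emeasure M D)"
    unfolding cond_exp_given_def XE ..
  have "cond_exp_given M S (\<lambda>w. dcount a n w 0) > 1 \<and> cond_exp_given M E (\<lambda>w. dcount a n w 0) < 1"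
    unfolding e1 e2 using c1 c2 by blast
  then show ?thesis unfolding S_def E_def .
qed

end

theorem mainTheorem9:
  fixes M :: "'a measure" and \<theta> :: "int \<Rightarrow> 'a \<Rightarrow> 'a" and a :: "int \<Rightarrow> 'a \<Rightarrow> int"
  assumes "prob_space M"
    and theta_meas: "\<And>n. \<theta> n \<in> measurable M M"
    and theta_pres: "\<And>n. distr M M (\<theta> n) = M"
    and theta_bij: "\<And>n. bij_betw (\<theta> n) (space M) (space M)"
    and theta_0: "\<And>w. w \<in> space M \<Longrightarrow> \<theta> 0 w = w"
    and theta_add: "\<And>m n w. w \<in> space M \<Longrightarrow> \<theta> (m + n) w = \<theta> m (\<theta> n w)"
    and a_meas: "\<And>n. a n \<in> measurable M (count_space UNIV)"
    and a_flow: "\<And>n w. w \<in> space M \<Longrightarrow> a n w = a 0 (\<theta> n w)"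
    and a_indep: "prob_space.indep_vars M (\<lambda>_. count_space UNIV) a UNIV"
    and a_ident: "\<And>n. distr M (count_space UNIV) (a n) = distr M (count_space UNIV) (a 0)"
    and a_pos: "\<And>n w. w \<in> space M \<Longrightarrow> a n w \<ge> 1"
    and a_int: "integrable M (\<lambda>w. real_of_int (a 0 w))"
    and p1_pos: "0 < measure M {w \<in> space M. a 0 w = 1}"
    and p1_lt: "measure M {w \<in> space M. a 0 w = 1} < 1"
    and n_pos: "n \<ge> 1"
  shows "cond_exp_given M {w \<in> space M. successful a w 0} (\<lambda>w. dcount a n w 0) > 1
       \<and> cond_exp_given M {w \<in> space M. ephemeral a w 0} (\<lambda>w. dcount a n w 0) < 1"
proof -
  have "efam M \<theta> a"
    using assms unfolding efam_def efam_axioms_def by blast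
  then interpret efam M \<theta> a .
  show ?thesis by (rule main_loc[OF n_pos])
qed

end
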